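(* In the setting below, assume $Z^j\epsilon_{\bullet,j}\ne0$ for all $j$, that for some $c>1$ $$\lambda\ge\frac{c+1}{c-1}\max_{i\in[n]}\Big(\sum_{j\in[p]}\frac{(Z^j_{i,\bullet}\epsilon_{\bullet,j})^2}{\|Z^j\epsilon_{\bullet,j}\|_2^2}\Big)^{1/2},$$ and that there is a matrix $V\in\mathbb R^{n\times p}$ with $\|V_{i,\bullet}\|_2\le1$ for all $i$ such that for every $j\in[p]$, $\|Z^j\widehat\Delta_{\bullet,j}\|_2^2=\xi_{\bullet,j}^\top Z^j\widehat\Delta_{\bullet,j}-\lambda\|\widehat\xi_{\bullet,j}\|_2V_{\bullet,j}^\top\widehat\Delta_{\bullet,j}$, where $\widehat\xi_{\bullet,j}=Z^j(X^{(n)}_{\bullet,j}-\widehat\Theta_{\bullet,j})$. Then $$\sum_{j=1}^p\|Z^j\widehat\Delta_{\bullet,j}\|_2^2\le2\lambda\|\xi^\top\|_{2,\infty}\|\widehat\Delta\|_{2,1}\Big(\frac{c-1}{c+1}+2\Big)+\big(\lambda\|\widehat\Delta\|_{2,1}\big)^2.$$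
   Context: Setting. Let $n,p\ge 1$, $[n]=\{1,\dots,n\}$. $X=Y+E^*\in\mathbb R^{n\times p}$ where (C1) the rows of $Y$ are independent $\mathcal N_p(\mu^*,\Sigma^* )$, $\Sigma^*$ positive definite; (C2) $E^*$ deterministic, $[n]=I\cup O$ a partition with the rows of $E^*$ indexed by $I$ equal to zero, and every row of $E^*(\Sigma^* )^{-1/2}$ of Euclidean norm at most $M_E\sqrt p$; $\mu^*=0$. $\Omega^*=(\Sigma^* )^{-1}$ with diagonal entries $\omega^*_{jj}$, $B^*=\Omega^*\mathrm{diag}(\Omega^* )^{-1}$, $X^{(n)}=X/\sqrt n$, $\Theta^*=E^*B^*/\sqrt n$, $\xi=X^{(n)}B^*-\Theta^*$, $\epsilon_{ij}=\sqrt n(\omega^*_{jj})^{1/2}\xi_{ij}$. Notation: $A_{i,\bullet}$, $A_{\bullet,j}$ rows/columns, $j^c=[p]\setminus\{j\}$, $\|A\|_{2,1}=\sum_i\|A_{i,\bullet}\|_2$, $\|\xi^\top\|_{2,\infty}=\max_j\|\xi_{\bullet,j}\|_2$. $Z^j$ is the orthogonal projector in $\mathbb R^n$ onto the orthogonal complement of the span of the columns of $X_{\bullet,j^c}$. Estimator: $\widehat\Theta$ minimizes over $\Theta\in\mathbb R^{n\times p}$ the function $\sum_{j=1}^p\|Z^j(X^{(n)}_{\bullet,j}-\Theta_{\bullet,j})\|_2+\lambda\|\Theta\|_{2,1}$, and $\widehat\Delta=\widehat\Theta-\Theta^*$. *)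

theory Defs
  imports "HOL-Analysis.Analysis"
begin

definition orth_proj :: "'a::euclidean_space set \<Rightarrow> 'a \<Rightarrow> 'a" where
  "orth_proj W v = (THE z. z \<in> W \<and> v - z \<in> orthogonal_comp W)"

text \<open>Z^j: projector onto the orthogonal complement of the span of the columns of X
  indexed by j^c = [p] - {j}.  Matrices are real^'p^'n (n rows, p columns).\<close>
definition Zproj :: "real^'p^'n \<Rightarrow> 'p \<Rightarrow> real^'n \<Rightarrow> real^'n" where
  "Zproj X j = orth_proj (orthogonal_comp (span {column k X | k. k \<noteq> j}))"

definition pos_def_mat :: "real^'p^'p \<Rightarrow> bool" where
  "pos_def_mat S \<longleftrightarrow> transpose S = S \<and> (\<forall>x. x \<noteq> 0 \<longrightarrow> x \<bullet> (S *v x) > 0)"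

definition inv_sqrt_mat :: "real^'p^'p \<Rightarrow> real^'p^'p" where
  "inv_sqrt_mat S = (THE R. pos_def_mat R \<and> R ** R = matrix_inv S)"

definition norm21 :: "real^'p^'n \<Rightarrow> real" where
  "norm21 A = (\<Sum>i\<in>UNIV. norm (row i A))"

definition normT2inf :: "real^'p^'n \<Rightarrow> real" where
  "normT2inf A = Max (range (\<lambda>j. norm (column j A)))"

definition objective :: "real^'p^'n \<Rightarrow> real^'p^'n \<Rightarrow> real \<Rightarrow> real^'p^'n \<Rightarrow> real" where
  "objective X Xn lam \<Theta> =
     (\<Sum>j\<in>UNIV. norm (Zproj X j (column j Xn - column j \<Theta>))) + lam * norm21 \<Theta>"

end

theory Submission imports Defs begin

lemma op_ex: fixes W :: "'a::euclidean_space set" assumes "subspace W"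
  shows "\<exists>z. z \<in> W \<and> v - z \<in> orthogonal_comp W"
proof -
  have "v \<in> W + orthogonal_comp W" using subspace_sum_orthogonal_comp[OF assms] by simp
  then obtain w u where "v = w + u" "w \<in> W" "u \<in> orthogonal_comp W" by (rule set_plus_elim)
  then have "w \<in> W \<and> v - w \<in> orthogonal_comp W" by simp
  then show ?thesis by (rule exI)
qed

lemma op_uniq: fixes W :: "'a::euclidean_space set" assumes "subspace W"
  and "z1 \<in> W" "v - z1 \<in> orthogonal_comp W" "z2 \<in> W" "v - z2 \<in> orthogonal_comp W"
  shows "z1 = z2"
proof -
  have "z1 - z2 \<in> W" using subspace_diff[OF assms(1) assms(2) assms(4)] .
  moreover have "z1 - z2 \<in> orthogonal_comp W"
    using subspace_diff[OF subspace_orthogonal_comp assms(5) assms(3)] by simp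
  ultimately have "z1 - z2 \<in> W \<inter> orthogonal_comp W" by (rule IntI)
  then show ?thesis unfolding orthogonal_Int_0[OF assms(1)] by simp
qed

lemma op_eq: fixes W :: "'a::euclidean_space set" assumes "subspace W"
  and "z \<in> W" "v - z \<in> orthogonal_comp W" shows "orth_proj W v = z"
  unfolding orth_proj_def
proof (rule the_equality)
  show "z \<in> W \<and> v - z \<in> orthogonal_comp W" using assms by simp
  fix y assume "y \<in> W \<and> v - y \<in> orthogonal_comp W"
  then show "y = z" using op_uniq[OF assms(1), of y v z] assms(2,3) by auto
qed

lemma op_prop: fixes W :: "'a::euclidean_space set" assumes "subspace W"
  shows "orth_proj W v \<in> W \<and> v - orth_proj W v \<in> orthogonal_comp W"
proof -
  obtain z where z: "z \<in> W" "v - z \<in> orthogonal_comp W" using op_ex[OF assms, of v] by (elim exE conjE)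
  have "orth_proj W v = z" by (rule op_eq[OF assms z])
  then show ?thesis using z by simp
qed

lemma op_in: fixes W :: "'a::euclidean_space set" assumes "subspace W"
  shows "orth_proj W v \<in> W" using op_prop[OF assms] by (rule conjunct1)

lemma op_perp: fixes W :: "'a::euclidean_space set" assumes "subspace W"
  shows "v - orth_proj W v \<in> orthogonal_comp W" using op_prop[OF assms] by (rule conjunct2)

lemma op_perp': fixes W :: "'a::euclidean_space set" assumes "subspace W" and "y \<in> W"
  shows "y \<bullet> (v - orth_proj W v) = 0"
  using op_perp[OF assms(1), of v] assms(2) unfolding orthogonal_comp_def orthogonal_def by simp

lemma op_add: fixes W :: "'a::euclidean_space set" assumes "subspace W"
  shows "orth_proj W (v + w) = orth_proj W v + orth_proj W w"
proof (rule op_eq[OF assms])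
  show "orth_proj W v + orth_proj W w \<in> W"
    by (rule subspace_add[OF assms op_in[OF assms] op_in[OF assms]])
  have eq: "v + w - (orth_proj W v + orth_proj W w) = (v - orth_proj W v) + (w - orth_proj W w)" by simp
  show "v + w - (orth_proj W v + orth_proj W w) \<in> orthogonal_comp W" unfolding eq
    by (rule subspace_add[OF subspace_orthogonal_comp op_perp[OF assms] op_perp[OF assms]])
qed

lemma op_scale: fixes W :: "'a::euclidean_space set" assumes "subspace W"
  shows "orth_proj W (a *\<^sub>R v) = a *\<^sub>R orth_proj W v"
proof (rule op_eq[OF assms])
  show "a *\<^sub>R orth_proj W v \<in> W" by (rule subspace_scale[OF assms op_in[OF assms]])
  have eq: "a *\<^sub>R v - a *\<^sub>R orth_proj W v = a *\<^sub>R (v - orth_proj W v)" by (simp add: algebra_simps)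
  show "a *\<^sub>R v - a *\<^sub>R orth_proj W v \<in> orthogonal_comp W" unfolding eq
    by (rule subspace_scale[OF subspace_orthogonal_comp op_perp[OF assms]])
qed

lemma op_sa: fixes W :: "'a::euclidean_space set" assumes "subspace W"
  shows "orth_proj W v \<bullet> w = v \<bullet> orth_proj W w"
proof -
  have a: "orth_proj W v \<bullet> (w - orth_proj W w) = 0" by (rule op_perp'[OF assms op_in[OF assms]])
  have b: "orth_proj W w \<bullet> (v - orth_proj W v) = 0" by (rule op_perp'[OF assms op_in[OF assms]])
  from a b show ?thesis by (simp add: inner_diff_right inner_commute)
qed

lemma op_idem_inner: fixes W :: "'a::euclidean_space set" assumes "subspace W"
  shows "orth_proj W v \<bullet> v = (norm (orth_proj W v))\<^sup>2"
proof -
  have "orth_proj W v \<bullet> (v - orth_proj W v) = 0" by (rule op_perp'[OF assms op_in[OF assms]])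
  then show ?thesis by (simp add: inner_diff_right power2_norm_eq_inner)
qed

lemma op_norm: fixes W :: "'a::euclidean_space set" assumes "subspace W"
  shows "norm (orth_proj W v) \<le> norm v"
proof (cases "orth_proj W v = 0")
  case True then show ?thesis by simp
next
  case False
  have "norm (orth_proj W v) * norm (orth_proj W v) \<le> norm (orth_proj W v) * norm v"
    using op_idem_inner[OF assms, of v] norm_cauchy_schwarz[of "orth_proj W v" v]
    by (simp add: power2_eq_square)
  then show ?thesis using False by simp
qed

lemma op_kill: fixes W :: "'a::euclidean_space set" assumes "subspace W"
  and "\<forall>y\<in>W. y \<bullet> v = 0" shows "orth_proj W v = 0"
proof (rule op_eq[OF assms(1)])
  show "0 \<in> W" by (rule subspace_0[OF assms(1)])
  show "v - 0 \<in> orthogonal_comp W" using assms(2) by (simp add: orthogonal_comp_def orthogonal_def)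
qed

lemma op_diff: fixes W :: "'a::euclidean_space set" assumes "subspace W"
  shows "orth_proj W (v - w) = orth_proj W v - orth_proj W w"
  using op_add[OF assms, of v "(-1) *\<^sub>R w"] op_scale[OF assms, of "-1" w] by simp

lemma op_0: fixes W :: "'a::euclidean_space set" assumes "subspace W"
  shows "orth_proj W 0 = 0"
  using op_scale[OF assms, of 0 0] by simp

lemma op_sum: fixes W :: "'a::euclidean_space set" assumes "subspace W" and "finite K"
  shows "orth_proj W (\<Sum>k\<in>K. f k) = (\<Sum>k\<in>K. orth_proj W (f k))"
  using assms(2) by (induction K rule: finite_induct) (simp_all add: op_0 op_add assms(1))

lemma Zsub: "subspace (orthogonal_comp (span {column k X | k. k \<noteq> j}))"
  by (rule subspace_orthogonal_comp)

lemma Zkill: assumes "k \<noteq> j" shows "Zproj X j (column k X) = 0"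
  unfolding Zproj_def
proof (rule op_kill[OF Zsub], intro ballI)
  fix y assume "y \<in> orthogonal_comp (span {column k X | k. k \<noteq> j})"
  moreover have "column k X \<in> span {column k X | k. k \<noteq> j}"
    using assms by (intro span_base) blast
  ultimately have "orthogonal (column k X) y"
    unfolding orthogonal_comp_def by blast
  then show "y \<bullet> column k X = 0"
    unfolding orthogonal_def by (simp add: inner_commute)
qed

lemma Zadd: "Zproj X j (v + w) = Zproj X j v + Zproj X j w"
  unfolding Zproj_def by (rule op_add[OF Zsub])
lemma Zdiff: "Zproj X j (v - w) = Zproj X j v - Zproj X j w"
  unfolding Zproj_def by (rule op_diff[OF Zsub])
lemma Zscale: "Zproj X j (a *\<^sub>R v) = a *\<^sub>R Zproj X j v"
  unfolding Zproj_def by (rule op_scale[OF Zsub])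
lemma Z0: "Zproj X j 0 = 0"
  unfolding Zproj_def by (rule op_0[OF Zsub])
lemmas Zlin = Zadd Zdiff Zscale Z0
lemma Zsum: "Zproj X j (\<Sum>k\<in>(UNIV::'k::finite set). f k) = (\<Sum>k\<in>UNIV. Zproj X j (f k))"
  unfolding Zproj_def by (rule op_sum[OF Zsub]) simp
lemma Zsa: "Zproj X j v \<bullet> w = v \<bullet> Zproj X j w"
  unfolding Zproj_def by (rule op_sa[OF Zsub])
lemma Znorm: "norm (Zproj X j v) \<le> norm v"
  unfolding Zproj_def by (rule op_norm[OF Zsub])

lemma column_mult: "column j (A ** B) = (\<Sum>k\<in>UNIV. (B$k$j) *\<^sub>R column k (A :: real^'k^'m))"
  by (simp add: vec_eq_iff column_def matrix_matrix_mult_def mult.commute)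

lemma column_diff: "column j (A - B) = column j A - column j (B :: real^'k^'m)"
  by (simp add: vec_eq_iff column_def)

lemma column_scale: "column j (a *\<^sub>R A) = a *\<^sub>R column j (A :: real^'k^'m)"
  by (simp add: vec_eq_iff column_def)

lemma norm_sq_vec: "(norm (x :: real^'n))\<^sup>2 = (\<Sum>i\<in>UNIV. (x$i)\<^sup>2)"
proof -
  have "(norm x)\<^sup>2 = x \<bullet> x" by (rule power2_norm_eq_inner)
  also have "\<dots> = (\<Sum>i\<in>UNIV. (x$i)\<^sup>2)" by (simp add: inner_vec_def power2_eq_square)
  finally show ?thesis .
qed

lemma cs_weighted:
  fixes r d :: "real^'p"
  assumes "\<forall>j. \<bar>g j\<bar> \<le> K"
  shows "\<bar>\<Sum>j\<in>UNIV. r$j * g j * d$j\<bar> \<le> norm r * K * norm d"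
proof -
  define y where "y = (\<chi> j. g j * d$j)"
  have K0: "K \<ge> 0" 
  proof -
    have "\<bar>g undefined\<bar> \<le> K" using assms by simp
    then show ?thesis by linarith
  qed
  have eq: "(\<Sum>j\<in>UNIV. r$j * g j * d$j) = r \<bullet> y"
    by (simp add: y_def inner_vec_def mult.assoc)
  have "(norm y)\<^sup>2 \<le> (K * norm d)\<^sup>2"
  proof -
    have "(norm y)\<^sup>2 = (\<Sum>j\<in>UNIV. (g j)\<^sup>2 * (d$j)\<^sup>2)"
      by (simp add: norm_sq_vec y_def power_mult_distrib)
    also have "\<dots> \<le> (\<Sum>j\<in>UNIV. K\<^sup>2 * (d$j)\<^sup>2)"
    proof (rule sum_mono)
      fix j
      have "(g j)\<^sup>2 \<le> K\<^sup>2" 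
      proof -
        have "\<bar>g j\<bar>\<^sup>2 \<le> K\<^sup>2" using assms by (intro power_mono) auto
        then show ?thesis by simp
      qed
      then show "(g j)\<^sup>2 * (d$j)\<^sup>2 \<le> K\<^sup>2 * (d$j)\<^sup>2" by (rule mult_right_mono) simp_all
    qed
    also have "\<dots> = (K * norm d)\<^sup>2"
      by (simp add: norm_sq_vec power_mult_distrib sum_distrib_left)
    finally show ?thesis .
  qed
  then have "norm y \<le> K * norm d" by (rule power2_le_imp_le) (use K0 in simp)
  then have "norm r * norm y \<le> norm r * (K * norm d)" by (rule mult_left_mono) simp
  moreover have "\<bar>r \<bullet> y\<bar> \<le> norm r * norm y" by (rule Cauchy_Schwarz_ineq2)
  ultimately show ?thesis unfolding eq by (simp add: mult.assoc)
qed

theorem mainTheorem8: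
  fixes X Y E :: "real^'p^'n"
    and \<Sigma> :: "real^'p^'p"
    and I O' :: "'n set"
    and M_E lam c :: real
    and \<Theta>hat V :: "real^'p^'n"
  assumes X_def: "X = Y + E"
    and Sigma_pd: "pos_def_mat \<Sigma>"
    and partition: "I \<union> O' = UNIV" "I \<inter> O' = {}"
    and E_inlier: "\<forall>i\<in>I. row i E = 0"
    and E_bound: "\<forall>i. norm (row i (E ** inv_sqrt_mat \<Sigma>)) \<le> M_E * sqrt (real CARD('p))"
    and est: "\<forall>\<Theta>. objective X ((1 / sqrt (real CARD('n))) *\<^sub>R X) lam \<Theta>hat
                   \<le> objective X ((1 / sqrt (real CARD('n))) *\<^sub>R X) lam \<Theta>"
    and c_gt: "c > 1"
  defines "\<Omega> \<equiv> matrix_inv \<Sigma>"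
    and "Xn \<equiv> (1 / sqrt (real CARD('n))) *\<^sub>R X"
  defines "B \<equiv> (\<chi> k j. \<Omega> $ k $ j / \<Omega> $ j $ j) :: real^'p^'p"
  defines "\<Theta>star \<equiv> (1 / sqrt (real CARD('n))) *\<^sub>R (E ** B)"
  defines "\<xi> \<equiv> Xn ** B - \<Theta>star"
  defines "\<epsilon> \<equiv> (\<chi> i j. sqrt (real CARD('n)) * sqrt (\<Omega> $ j $ j) * \<xi> $ i $ j) :: real^'p^'n"
    and "\<Delta> \<equiv> \<Theta>hat - \<Theta>star"
  assumes Zeps_nz: "\<forall>j. Zproj X j (column j \<epsilon>) \<noteq> 0"
    and lam_ge: "lam \<ge> (c + 1) / (c - 1) *
       Max (range (\<lambda>i. sqrt (\<Sum>j\<in>UNIV. (Zproj X j (column j \<epsilon>) $ i)\<^sup>2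
                                 / (norm (Zproj X j (column j \<epsilon>)))\<^sup>2)))"
    and V_rows: "\<forall>i. norm (row i V) \<le> 1"
    and V_eq: "\<forall>j. (norm (Zproj X j (column j \<Delta>)))\<^sup>2
        = column j \<xi> \<bullet> Zproj X j (column j \<Delta>)
          - lam * norm (Zproj X j (column j Xn - column j \<Theta>hat)) * (column j V \<bullet> column j \<Delta>)"
  shows "(\<Sum>j\<in>UNIV. (norm (Zproj X j (column j \<Delta>)))\<^sup>2)
     \<le> 2 * lam * normT2inf \<xi> * norm21 \<Delta> * ((c - 1) / (c + 1) + 2) + (lam * norm21 \<Delta>)\<^sup>2"
  proof -
  let ?n = "real CARD('n)"
  have n0: "?n > 0" by simp
  define T where "T = normT2inf \<xi>"
  define N where "N = norm21 \<Delta>"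
  define a where "a = (\<lambda>j. norm (Zproj X j (column j \<Delta>)))"
  define S where "S = (\<Sum>j\<in>UNIV. (a j)\<^sup>2)"
  define M where "M = Max (range (\<lambda>i. sqrt (\<Sum>j\<in>UNIV. (Zproj X j (column j \<epsilon>) $ i)\<^sup>2
                                 / (norm (Zproj X j (column j \<epsilon>)))\<^sup>2)))"
  define kk where "kk = (\<lambda>j. sqrt ?n * sqrt (\<Omega> $ j $ j))"
  define h where "h = (\<lambda>j. norm (Zproj X j (column j Xn - column j \<Theta>hat)))"
  have hT: "\<And>j. norm (column j \<xi>) \<le> T"
    unfolding T_def normT2inf_def by (rule Max_ge) auto
  have T0: "T \<ge> 0" using hT[of undefined] norm_ge_zero[of "column undefined \<xi>"] by linarith
  have hM: "\<And>i. sqrt (\<Sum>j\<in>UNIV. (Zproj X j (column j \<epsilon>) $ i)\<^sup>2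
                                 / (norm (Zproj X j (column j \<epsilon>)))\<^sup>2) \<le> M"
    unfolding M_def by (rule Max_ge) auto
  have M0: "M \<ge> 0"
  proof -
    have "0 \<le> sqrt (\<Sum>j\<in>UNIV. (Zproj X j (column j \<epsilon>) $ undefined)\<^sup>2
                                 / (norm (Zproj X j (column j \<epsilon>)))\<^sup>2)"
      by (intro real_sqrt_ge_zero sum_nonneg divide_nonneg_nonneg) simp_all
    then show ?thesis using hM[of undefined] by linarith
  qed
  have N0: "N \<ge> 0" unfolding N_def norm21_def by (simp add: sum_nonneg)
  have S0: "S \<ge> 0" unfolding S_def by (simp add: sum_nonneg)
  have cfrac: "(c + 1) / (c - 1) > 0" using c_gt by simp
  have lamM: "(c + 1) / (c - 1) * M \<le> lam" using lam_ge unfolding M_def .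
  have lam0: "lam \<ge> 0"
  proof -
    have "0 \<le> (c + 1) / (c - 1) * M" by (rule mult_nonneg_nonneg[OF less_imp_le[OF cfrac] M0])
    then show ?thesis using lamM by linarith
  qed
  have Mle: "M \<le> (c - 1) / (c + 1) * lam"
  proof -
    have "M = (c - 1) / (c + 1) * ((c + 1) / (c - 1) * M)" 
    proof -
      have ne: "c - 1 \<noteq> 0" "c + 1 \<noteq> 0" using c_gt by auto
      have "(c - 1) / (c + 1) * ((c + 1) / (c - 1)) = 1" using ne by simp
      then show ?thesis by (simp add: mult.assoc[symmetric])
    qed
    also have "\<dots> \<le> (c - 1) / (c + 1) * lam" using lamM c_gt by (intro mult_left_mono) auto
    finally show ?thesis .
  qed
  have colEps: "\<And>j. column j \<epsilon> = kk j *\<^sub>R column j \<xi>"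
    by (simp add: vec_eq_iff column_def \<epsilon>_def kk_def)
  have kk0: "\<And>j. kk j \<noteq> 0"
  proof
    fix j assume "kk j = 0"
    then have "column j \<epsilon> = 0" using colEps by simp
    then have "Zproj X j (column j \<epsilon>) = 0" by (simp add: Zlin)
    then show False using Zeps_nz by blast
  qed
  have Om0: "\<And>j. \<Omega> $ j $ j \<noteq> 0" using kk0 unfolding kk_def by auto
  have Bjj: "\<And>j. B $ j $ j = 1" using Om0 unfolding B_def by simp
  have ZXnB: "\<And>j. Zproj X j (column j (Xn ** B)) = Zproj X j (column j Xn)"
  proof -
    fix j
    have "Zproj X j (column j (Xn ** B)) = (\<Sum>k\<in>UNIV. (B$k$j) *\<^sub>R Zproj X j (column k Xn))"
      by (simp add: column_mult Zsum Zlin)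
    also have "\<dots> = (\<Sum>k\<in>UNIV. if k = j then Zproj X j (column j Xn) else 0)"
      by (rule sum.cong) (auto simp: Bjj Xn_def column_scale Zlin Zkill)
    finally show "Zproj X j (column j (Xn ** B)) = Zproj X j (column j Xn)" by simp
  qed
  have Zxi: "\<And>j. Zproj X j (column j \<xi>) = Zproj X j (column j Xn) - Zproj X j (column j \<Theta>star)"
    by (simp add: \<xi>_def column_diff Zlin ZXnB)
  have hxi: "\<And>j. Zproj X j (column j Xn - column j \<Theta>hat)
       = Zproj X j (column j \<xi>) - Zproj X j (column j \<Delta>)"
  proof -
    fix j
    have eq: "column j Xn - column j \<Theta>hat = (column j Xn - column j \<Theta>star) - column j \<Delta>"
      by (simp add: \<Delta>_def column_diff)
    show "Zproj X j (column j Xn - column j \<Theta>hat)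
       = Zproj X j (column j \<xi>) - Zproj X j (column j \<Delta>)"
      by (simp only: eq Zdiff Zxi)
  qed
  have aS: "\<And>j. a j \<le> sqrt S"
  proof -
    fix j
    have "(a j)\<^sup>2 \<le> S" unfolding S_def by (rule member_le_sum) auto
    then show "a j \<le> sqrt S" by (simp add: real_le_rsqrt)
  qed
  have hle: "\<And>j. \<bar>h j\<bar> \<le> T + sqrt S"
  proof -
    fix j
    have "h j \<le> norm (Zproj X j (column j \<xi>)) + a j"
      unfolding h_def a_def hxi by (rule norm_triangle_ineq4)
    also have "\<dots> \<le> T + sqrt S" using Znorm[of X j "column j \<xi>"] hT[of j] aS[of j] by linarith
    finally show "\<bar>h j\<bar> \<le> T + sqrt S" unfolding h_def by simp
  qed
  define w where "w = (\<lambda>i. (\<chi> j. Zproj X j (column j \<epsilon>) $ i / norm (Zproj X j (column j \<epsilon>))) :: real^'p)"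
  define t where "t = (\<lambda>j. norm (Zproj X j (column j \<epsilon>)) / kk j)"
  have Zxi_eps: "\<And>j. Zproj X j (column j \<xi>) = (1 / kk j) *\<^sub>R Zproj X j (column j \<epsilon>)"
    using kk0 by (simp add: colEps Zlin)
  have tle: "\<forall>j. \<bar>t j\<bar> \<le> T"
  proof
    fix j
    have "\<bar>t j\<bar> = norm (Zproj X j (column j \<xi>))"
      by (simp add: Zxi_eps t_def abs_divide)
    also have "\<dots> \<le> T" using Znorm[of X j "column j \<xi>"] hT[of j] by linarith
    finally show "\<bar>t j\<bar> \<le> T" .
  qed
  have wn: "\<And>i. norm (w i) \<le> M"
  proof -
    fix i
    have "norm (w i) = sqrt (\<Sum>j\<in>UNIV. (Zproj X j (column j \<epsilon>) $ i)\<^sup>2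
                                 / (norm (Zproj X j (column j \<epsilon>)))\<^sup>2)"
      by (simp add: norm_vec_def L2_set_def w_def power_divide)
    then show "norm (w i) \<le> M" using hM by simp
  qed
  have F1: "(\<Sum>j\<in>UNIV. column j \<xi> \<bullet> Zproj X j (column j \<Delta>)) \<le> M * T * N"
  proof -
    have "(\<Sum>j\<in>UNIV. column j \<xi> \<bullet> Zproj X j (column j \<Delta>))
        = (\<Sum>j\<in>UNIV. \<Sum>i\<in>UNIV. w i $ j * t j * row i \<Delta> $ j)"
    proof (rule sum.cong[OF refl])
      fix j
      have nz: "norm (Zproj X j (column j \<epsilon>)) \<noteq> 0" using Zeps_nz by simp
      have "column j \<xi> \<bullet> Zproj X j (column j \<Delta>) = Zproj X j (column j \<xi>) \<bullet> column j \<Delta>"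
        by (simp add: Zsa)
      also have "\<dots> = (\<Sum>i\<in>UNIV. w i $ j * t j * row i \<Delta> $ j)"
        unfolding inner_vec_def Zxi_eps
        by (rule sum.cong[OF refl]) (use nz kk0 in \<open>simp add: w_def t_def row_def column_def\<close>)
      finally show "column j \<xi> \<bullet> Zproj X j (column j \<Delta>) = (\<Sum>i\<in>UNIV. w i $ j * t j * row i \<Delta> $ j)" .
    qed
    also have "\<dots> = (\<Sum>i\<in>UNIV. \<Sum>j\<in>UNIV. w i $ j * t j * row i \<Delta> $ j)"
      by (rule sum.swap)
    also have "\<dots> \<le> (\<Sum>i\<in>UNIV. \<bar>\<Sum>j\<in>UNIV. w i $ j * t j * row i \<Delta> $ j\<bar>)"
      by (rule sum_mono) simp
    also have "\<dots> \<le> (\<Sum>i\<in>UNIV. M * T * norm (row i \<Delta>))"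
    proof (rule sum_mono)
      fix i
      have "\<bar>\<Sum>j\<in>UNIV. w i $ j * t j * row i \<Delta> $ j\<bar> \<le> norm (w i) * T * norm (row i \<Delta>)"
        by (rule cs_weighted[OF tle])
      also have "\<dots> \<le> M * T * norm (row i \<Delta>)"
        using wn[of i] T0 by (intro mult_right_mono) auto
      finally show "\<bar>\<Sum>j\<in>UNIV. w i $ j * t j * row i \<Delta> $ j\<bar> \<le> M * T * norm (row i \<Delta>)" .
    qed
    also have "\<dots> = M * T * N" by (simp add: N_def norm21_def sum_distrib_left)
    finally show ?thesis .
  qed
  have F2: "\<bar>\<Sum>j\<in>UNIV. h j * (column j V \<bullet> column j \<Delta>)\<bar> \<le> (T + sqrt S) * N"
  proof -
    have "(\<Sum>j\<in>UNIV. h j * (column j V \<bullet> column j \<Delta>))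
        = (\<Sum>j\<in>UNIV. \<Sum>i\<in>UNIV. row i V $ j * h j * row i \<Delta> $ j)"
      by (simp add: inner_vec_def sum_distrib_left row_def column_def mult.commute mult.left_commute)
    also have "\<dots> = (\<Sum>i\<in>UNIV. \<Sum>j\<in>UNIV. row i V $ j * h j * row i \<Delta> $ j)"
      by (rule sum.swap)
    finally have eq: "(\<Sum>j\<in>UNIV. h j * (column j V \<bullet> column j \<Delta>))
        = (\<Sum>i\<in>UNIV. \<Sum>j\<in>UNIV. row i V $ j * h j * row i \<Delta> $ j)" .
    have "\<bar>\<Sum>i\<in>UNIV. \<Sum>j\<in>UNIV. row i V $ j * h j * row i \<Delta> $ j\<bar>
        \<le> (\<Sum>i\<in>UNIV. \<bar>\<Sum>j\<in>UNIV. row i V $ j * h j * row i \<Delta> $ j\<bar>)"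
      by (rule sum_abs)
    also have "\<dots> \<le> (\<Sum>i\<in>UNIV. (T + sqrt S) * norm (row i \<Delta>))"
    proof (rule sum_mono)
      fix i
      have "\<bar>\<Sum>j\<in>UNIV. row i V $ j * h j * row i \<Delta> $ j\<bar> \<le> norm (row i V) * (T + sqrt S) * norm (row i \<Delta>)"
        by (rule cs_weighted) (use hle in blast)
      also have "\<dots> \<le> (T + sqrt S) * norm (row i \<Delta>)"
      proof (rule mult_right_mono)
        show "norm (row i V) * (T + sqrt S) \<le> T + sqrt S"
          by (rule mult_left_le_one_le) (use V_rows T0 S0 in auto)
      qed simp
      finally show "\<bar>\<Sum>j\<in>UNIV. row i V $ j * h j * row i \<Delta> $ j\<bar> \<le> (T + sqrt S) * norm (row i \<Delta>)" .
    qed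
    also have "\<dots> = (T + sqrt S) * N" by (simp add: N_def norm21_def sum_distrib_left)
    finally show ?thesis using eq by simp
  qed
  have Seq: "S = (\<Sum>j\<in>UNIV. column j \<xi> \<bullet> Zproj X j (column j \<Delta>))
      - lam * (\<Sum>j\<in>UNIV. h j * (column j V \<bullet> column j \<Delta>))"
    unfolding S_def a_def h_def using V_eq
    by (simp add: sum_subtractf sum_distrib_left mult.assoc)
  have "S \<le> M * T * N + lam * ((T + sqrt S) * N)"
  proof -
    have "- (lam * (\<Sum>j\<in>UNIV. h j * (column j V \<bullet> column j \<Delta>))) \<le> lam * ((T + sqrt S) * N)"
      using F2 lam0 by (smt (verit) abs_le_D2 mult_left_mono mult_minus_right)
    then show ?thesis using Seq F1 by linarith
  qed
  moreover have "M * T * N \<le> (c - 1) / (c + 1) * lam * T * N"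
    using Mle T0 N0 by (intro mult_right_mono) auto
  moreover have "lam * sqrt S * N \<le> S / 2 + (lam * N)\<^sup>2 / 2"
  proof -
    have "0 \<le> (sqrt S - lam * N)\<^sup>2" by simp
    then show ?thesis using S0 by (simp add: power2_diff algebra_simps)
  qed
  moreover have "lam * T * N \<ge> 0" using lam0 T0 N0 by simp
  moreover have "M * T * N + lam * ((T + sqrt S) * N) = M * T * N + lam * T * N + lam * sqrt S * N"
    by (simp add: algebra_simps)
  moreover have "2 * lam * T * N * ((c - 1) / (c + 1) + 2)
      = 2 * ((c - 1) / (c + 1) * lam * T * N) + 4 * (lam * T * N)"
    by (simp add: algebra_simps)
  ultimately have "S \<le> 2 * lam * T * N * ((c - 1) / (c + 1) + 2) + (lam * N)\<^sup>2"
    by linarith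
  then show ?thesis unfolding S_def a_def T_def N_def .
qed

end
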